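(* Let $c\ge2$ and let $F$ be a standard $c$-coloring. Let $X\in\mathcal X_F$ and let $c_1$ be the color of the monochromatic clique $F[X]$. Then for every $y\in V(F)\setminus X$ there exists at most one edge $e_0\in y\ast X$ with $F(e_0)=c_1$, and there is a color $c_2\neq c_1$ such that $F(e)=c_2$ for all $e\in (y\ast X)\setminus\{e_0\}$ (where $\{e_0\}$ is empty if no such edge exists).
   Context: A $c$-coloring $F$ is a map from the $2$-subsets of a finite set $V(F)$ to $[c]$. $F$ is standard if it contains no induced copy of any coloring in $\hat K_{3,1}$ or $\hat K_{3,3}$, where: $\hat K_{3,1}$ is the family of $4$-vertex colorings consisting of a monochromatic triangle of color $a$ plus a vertex joined to it by either (two edges of color $a$ and one of color $b\ne a$), or (three edges of three distinct colors, one being $a$), or (two edges of color $b$ and one of color $d$, with $a,b,d$ distinct); $\hat K_{3,3}$ is the family of $6$-vertex colorings consisting of two disjoint triangles monochromatic in colors $a$ and $b$ with all nine edges between them of color $d$, $a,b,d$ distinct. $\mathcal X_F$ is the set of all inclusion-maximal vertex sets $X$ of size at least $\max(c+1,6)$ such that all pairs inside $X$ have the same color. For disjoint sets $S_1,S_2$, $S_1\ast S_2$ is the set of pairs $\{v_1,v_2\}$ with $v_i\in S_i$, and $y\ast S=\{y\}\ast S$. *)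

theory Defs
  imports Main "HOL-Library.Multiset"
begin

text \<open>A c-coloring on a finite vertex set V: F assigns to every 2-subset {u,v} of V a colour in [c] = {1..c}.
  Colourings are represented by a function on sets; only its values on 2-subsets of V matter.\<close>
definition is_coloring :: "nat \<Rightarrow> 'a set \<Rightarrow> ('a set \<Rightarrow> nat) \<Rightarrow> bool" where
  "is_coloring c V F \<longleftrightarrow> finite V \<and> (\<forall>u\<in>V. \<forall>v\<in>V. u \<noteq> v \<longrightarrow> F {u, v} \<in> {1..c})"

definition induced_copy :: "'b set \<Rightarrow> ('b set \<Rightarrow> nat) \<Rightarrow> 'a set \<Rightarrow> ('a set \<Rightarrow> nat) \<Rightarrow> bool" where
  "induced_copy W G V F \<longleftrightarrow> (\<exists>\<phi>. inj_on \<phi> W \<and> \<phi> ` W \<subseteq> V \<and>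
      (\<forall>u\<in>W. \<forall>v\<in>W. u \<noteq> v \<longrightarrow> F {\<phi> u, \<phi> v} = G {u, v}))"

text \<open>Vertex set {0,1,2,3}: triangle {0,1,2} of colour a, vertex 3 joined to 0,1,2 by colours p,q,r.\<close>
definition K31 :: "nat \<Rightarrow> nat \<Rightarrow> nat \<Rightarrow> nat \<Rightarrow> nat set \<Rightarrow> nat" where
  "K31 a p q r e = (if (3::nat) \<notin> e then a else if (0::nat) \<in> e then p else if (1::nat) \<in> e then q else r)"

definition K31_family :: "(nat set \<Rightarrow> nat) set" where
  "K31_family = {K31 a p q r | a p q r.
      (\<exists>b. b \<noteq> a \<and> {#p, q, r#} = {#a, a, b#})
    \<or> (p \<noteq> q \<and> p \<noteq> r \<and> q \<noteq> r \<and> a \<in> {p, q, r})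
    \<or> (\<exists>b d. a \<noteq> b \<and> a \<noteq> d \<and> b \<noteq> d \<and> {#p, q, r#} = {#b, b, d#})}"

definition K33 :: "nat \<Rightarrow> nat \<Rightarrow> nat \<Rightarrow> nat set \<Rightarrow> nat" where
  "K33 a b d e = (if e \<subseteq> {0,1,2} then a else if e \<subseteq> {3,4,5} then b else d)"

definition K33_family :: "(nat set \<Rightarrow> nat) set" where
  "K33_family = {K33 a b d | a b d. a \<noteq> b \<and> a \<noteq> d \<and> b \<noteq> d}"

definition standard :: "nat \<Rightarrow> 'a set \<Rightarrow> ('a set \<Rightarrow> nat) \<Rightarrow> bool" where
  "standard c V F \<longleftrightarrow> is_coloring c V F
     \<and> \<not> (\<exists>G\<in>K31_family. induced_copy {0,1,2,3} G V F)
     \<and> \<not> (\<exists>G\<in>K33_family. induced_copy {0,1,2,3,4,5} G V F)"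

definition monochromatic :: "('a set \<Rightarrow> nat) \<Rightarrow> 'a set \<Rightarrow> bool" where
  "monochromatic F X \<longleftrightarrow> (\<exists>col. \<forall>u\<in>X. \<forall>v\<in>X. u \<noteq> v \<longrightarrow> F {u, v} = col)"

definition XF :: "nat \<Rightarrow> 'a set \<Rightarrow> ('a set \<Rightarrow> nat) \<Rightarrow> 'a set set" where
  "XF c V F = {X. X \<subseteq> V \<and> card X \<ge> max (c + 1) 6 \<and> monochromatic F X
      \<and> (\<forall>Y. X \<subset> Y \<and> Y \<subseteq> V \<and> card Y \<ge> max (c + 1) 6 \<and> monochromatic F Y \<longrightarrow> False)}"

definition star :: "'a \<Rightarrow> 'a set \<Rightarrow> 'a set set" where
  "star y S = {{y, x} | x. x \<in> S}"

end

theory Submission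
  imports Defs
begin

lemma K31_copy:
  assumes "distinct [t0,t1,t2,w]" "t0 \<in> V" "t1 \<in> V" "t2 \<in> V" "w \<in> V"
    "F {t0,t1} = a" "F {t0,t2} = a" "F {t1,t2} = a"
    "F {w,t0} = p" "F {w,t1} = q" "F {w,t2} = r"
  shows "induced_copy {0,1,2,3} (K31 a p q r) V F"
  unfolding induced_copy_def
  apply (rule exI[of _ "\<lambda>i::nat. if i=0 then t0 else if i=1 then t1 else if i=2 then t2 else w"])
  using assms by (auto simp: K31_def insert_commute inj_on_def)

theorem claim5p3:
  fixes c :: nat and V :: "'a set" and F :: "'a set \<Rightarrow> nat" and X :: "'a set" and c1 :: nat
  assumes "c \<ge> 2"
    and "standard c V F"
    and "X \<in> XF c V F"
    and "\<forall>u\<in>X. \<forall>v\<in>X. u \<noteq> v \<longrightarrow> F {u, v} = c1"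
  shows "\<forall>y \<in> V - X.
           card {e \<in> star y X. F e = c1} \<le> 1
         \<and> (\<exists>c2. c2 \<noteq> c1 \<and> (\<forall>e \<in> star y X - {e \<in> star y X. F e = c1}. F e = c2))"
proof
  fix y assume yV: "y \<in> V - X"
  have col: "is_coloring c V F" and noK: "\<And>G. G \<in> K31_family \<Longrightarrow> \<not> induced_copy {0,1,2,3} G V F"
    using assms(2) unfolding standard_def by blast+
  have XV: "X \<subseteq> V" and cX: "card X \<ge> max (c + 1) 6"
    and maxX: "\<And>Y. X \<subset> Y \<Longrightarrow> Y \<subseteq> V \<Longrightarrow> card Y \<ge> max (c + 1) 6 \<Longrightarrow> monochromatic F Y \<Longrightarrow> False"
    using assms(3) unfolding XF_def by blast+
  have finV: "finite V" using col unfolding is_coloring_def by blast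
  have finX: "finite X" using XV finV finite_subset by blast
  have colr: "\<And>x. x \<in> X \<Longrightarrow> F {y,x} \<in> {1..c}" using col yV XV unfolding is_coloring_def by (metis DiffE subsetD)
  define S where "S = {x\<in>X. F{y,x} = c1}"
  have tri: "\<And>u v. u \<in> X \<Longrightarrow> v \<in> X \<Longrightarrow> u \<noteq> v \<Longrightarrow> F {u,v} = c1" using assms(4) by blast
  have imS: "{e \<in> star y X. F e = c1} = (\<lambda>x. {y,x}) ` S"
    unfolding S_def star_def by auto
  have injS: "inj_on (\<lambda>x. {y,x}) S" using yV unfolding S_def inj_on_def by (auto simp: doubleton_eq_iff)
  have S1: "card S \<le> 1"
  proof (rule ccontr)
    assume "\<not> card S \<le> 1"
    then obtain x1 x2 where x12: "x1 \<in> S" "x2 \<in> S" "x1 \<noteq> x2"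
      by (metis One_nat_def card_le_Suc0_iff_eq not_less_eq_eq card.infinite zero_le)
    show False
    proof (cases "S = X")
      case True
      have "monochromatic F (insert y X)"
        unfolding monochromatic_def
        apply (rule exI[of _ c1])
        using True tri unfolding S_def by (auto simp: insert_commute)
      moreover have "X \<subset> insert y X" using yV by blast
      moreover have "insert y X \<subseteq> V" using yV XV by blast
      moreover have "card (insert y X) \<ge> max (c + 1) 6" using cX finX yV by (simp add: max_def split: if_splits)
      ultimately show False using maxX by blast
    next
      case False
      then obtain x3 where x3: "x3 \<in> X" "x3 \<notin> S" unfolding S_def by blast
      have "induced_copy {0,1,2,3} (K31 c1 c1 c1 (F{y,x3})) V F"
        apply (rule K31_copy)
        using x12 x3 yV XV tri unfolding S_def by auto
      moreover have "K31 c1 c1 c1 (F{y,x3}) \<in> K31_family"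
        unfolding K31_family_def using x3 unfolding S_def by blast
      ultimately show False using noK by blast
    qed
  qed
  have same: "F{y,x1} = F{y,x2}" if x12: "x1 \<in> X - S" "x2 \<in> X - S" for x1 x2
  proof (rule ccontr)
    assume ne: "F{y,x1} \<noteq> F{y,x2}"
    show False
    proof (cases "S = {}")
      case False
      then obtain x0 where x0: "x0 \<in> S" by blast
      have d: "x0 \<noteq> x1" "x0 \<noteq> x2" "x1 \<noteq> x2" using x0 x12 ne by auto
      have "induced_copy {0,1,2,3} (K31 c1 c1 (F{y,x1}) (F{y,x2})) V F"
        apply (rule K31_copy)
        using x12 x0 yV XV d tri[of x0 x1] tri[of x0 x2] tri[of x1 x2] unfolding S_def by auto
      moreover have "K31 c1 c1 (F{y,x1}) (F{y,x2}) \<in> K31_family"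
        unfolding K31_family_def using x12 ne unfolding S_def by blast
      ultimately show False using noK by blast
    next
      case True
      define g where "g = (\<lambda>x. F{y,x})"
      have "\<not> inj_on g X"
      proof
        assume "inj_on g X"
        hence "card (g ` X) = card X" by (rule card_image)
        moreover have "g ` X \<subseteq> {1..c}" using colr unfolding g_def by blast
        hence "card (g ` X) \<le> c" using card_mono[of "{1..c}"] by fastforce
        ultimately show False using cX by simp
      qed
      then obtain u v where uv: "u \<in> X" "v \<in> X" "u \<noteq> v" "g u = g v"
        unfolding inj_on_def by blast
      obtain z where z: "z \<in> X" "g z \<noteq> g u"
        using ne x12 unfolding g_def by (metis DiffD1)
      have zn: "z \<noteq> u" "z \<noteq> v" using z uv by auto
      have nc: "\<And>x. x \<in> X \<Longrightarrow> g x \<noteq> c1" using True unfolding S_def g_def by blast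
      have "induced_copy {0,1,2,3} (K31 c1 (g u) (g u) (g z)) V F"
      proof (rule K31_copy)
        show "distinct [u, v, z, y]" using uv z zn yV by auto
        show "u \<in> V" "v \<in> V" "z \<in> V" "y \<in> V" using uv z XV yV by auto
        show "F {u, v} = c1" "F {u, z} = c1" "F {v, z} = c1" using tri uv z zn by auto
        show "F {y, u} = g u" "F {y, v} = g u" "F {y, z} = g z" using uv unfolding g_def by auto
      qed
      moreover have "K31 c1 (g u) (g u) (g z) \<in> K31_family"
        proof -
        have "c1 \<noteq> g u \<and> c1 \<noteq> g z \<and> g u \<noteq> g z \<and> {#g u, g u, g z#} = {#g u, g u, g z#}"
          using nc[OF uv(1)] nc[OF z(1)] z(2) by metis
        thus ?thesis unfolding K31_family_def by blast
      qed
      ultimately show False using noK by blast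
    qed
  qed
  obtain c2 where c2: "c2 \<noteq> c1" "\<forall>x\<in>X - S. F{y,x} = c2"
  proof (cases "X - S = {}")
    case True
    then show ?thesis using that[of "Suc c1"] by auto
  next
    case False
    then obtain x where "x \<in> X - S" by blast
    then show ?thesis using that[of "F{y,x}"] same unfolding S_def by blast
  qed
  show "card {e \<in> star y X. F e = c1} \<le> 1
         \<and> (\<exists>c2. c2 \<noteq> c1 \<and> (\<forall>e \<in> star y X - {e \<in> star y X. F e = c1}. F e = c2))"
  proof
    show "card {e \<in> star y X. F e = c1} \<le> 1" using imS card_image[OF injS] S1 by simp
    show "\<exists>c2. c2 \<noteq> c1 \<and> (\<forall>e \<in> star y X - {e \<in> star y X. F e = c1}. F e = c2)"
      using c2 unfolding star_def S_def by auto
  qed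
qed

end
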